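(* Let $\mathcal{T}$ be a tangle of order $k$ in a connectivity system $(E,\lambda)$, and let $\mathcal{S}$ be a tree compatible set. Let $n\geq 2$, and let $\Phi=(P_1,\ldots,P_n)$ be a $k$-flower in $\mathcal{T}$. If $P_1\subseteq \mathrm{fcl}_{\mathcal{T}}(P_2)$, then the concatenation $\Phi '=(P_1\cup P_2,P_3,\ldots, P_n)$ of $\Phi$ is $\mathcal{T}$-equivalent to $\Phi$ with respect to $\mathcal{S}$.
   Context: A connectivity system is a pair $(E,\lambda)$ with $E$ finite and $\lambda$ an integer-valued symmetric submodular function on subsets of $E$. $X$ is $k$-separating if $\lambda(X)\le k$; a $k$-separation is an unordered partition $(X,E-X)$ with $\lambda(X)\le k$. A tangle of order $k$ is a collection $\mathcal T$ of subsets of $E$ with (T1) $\lambda(A)<k$ for $A\in\mathcal T$; (T2) if $\lambda(A)\le k-1$ then $A$ or $E-A$ is in $\mathcal T$; (T3) $A\cup B\cup C\ne E$ for $A,B,C\in\mathcal T$; (T4) $E-\{e\}\notin\mathcal T$. A set is $\mathcal T$-weak if contained in a member of $\mathcal T$, otherwise $\mathcal T$-strong; partitions/$k$-separations are $\mathcal T$-strong if all parts are. A $\mathcal T$-strong $k$-separating $X$ is fully closed if $X\cup Y$ is not $k$-separating for every nonempty $\mathcal T$-weak $Y\subseteq E-X$; $\mathrm{fcl}_{\mathcal T}(X)$ is the intersection of all fully closed $k$-separating sets containing $X$. $\mathcal T$-strong $k$-separations $(X,Y),(X',Y')$ are $\mathcal T$-equivalent if $\{\mathrm{fcl}_{\mathcal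 T}(X),\mathrm{fcl}_{\mathcal T}(Y)\}=\{\mathrm{fcl}_{\mathcal T}(X'),\mathrm{fcl}_{\mathcal T}(Y')\}$. $X$ is $\mathcal T$-sequential if it is $k$-separating, $E-X$ is $\mathcal T$-strong and $\mathrm{fcl}_{\mathcal T}(E-X)=E$. Let $\mathcal S$ be a set of non-$\mathcal T$-sequential $k$-separating sets with $\mathcal T$-strong complements; a $(k,\mathcal S)$-separation is a $k$-separation $(X,E-X)$ with $X,E-X\in\mathcal S$. $\mathcal S$ is tree compatible if (S1) any $\mathcal T$-strong $k$-separation $\mathcal T$-equivalent to a $(k,\mathcal S)$-separation is a $(k,\mathcal S)$-separation, and (S2) if $X\in\mathcal S$ and $(Y,E-Y)$ is a $\mathcal T$-strong $k$-separation with $X\subseteq Y$ then $Y\in\mathcal S$. A $k$-flower in $\mathcal T$ is a $\mathcal T$-strong partition $(P_1,\dots,P_n)$ of $E$ with $P_i$ and $P_i\cup P_{i+1}$ $k$-separating for all $i$ (mod $n$); it displays $(X,E-X)$ if $X$ is a union of petals. $\Phi_1\preccurlyeq_{\mathcal S}\Phi_2$ if each $(k,\mathcal S)$-separation displayed by $\Phi_1$ is $\mathcal T$-equivalent to some $(k,\mathcal S)$-separation displayed by $\Phi_2$; $\Phi_1,\Phi_2$ are $\mathcal T$-equivalent with respect to $\mathcal S$ if both $\Phi_1\preccurlyeq_{\mathcal S}\Phi_2$ and $\Phi_2\preccurlyeq_{\mathcal S}\Phi_1$. *)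

theory Defs
  imports Main
begin

definition connectivity_system :: "'a set \<Rightarrow> ('a set \<Rightarrow> int) \<Rightarrow> bool" where
  "connectivity_system E lam \<longleftrightarrow> finite E
     \<and> (\<forall>X. X \<subseteq> E \<longrightarrow> lam X = lam (E - X))
     \<and> (\<forall>X Y. X \<subseteq> E \<longrightarrow> Y \<subseteq> E \<longrightarrow> lam X + lam Y \<ge> lam (X \<union> Y) + lam (X \<inter> Y))"

definition k_separating :: "'a set \<Rightarrow> ('a set \<Rightarrow> int) \<Rightarrow> int \<Rightarrow> 'a set \<Rightarrow> bool" where
  "k_separating E lam k X \<longleftrightarrow> X \<subseteq> E \<and> lam X \<le> k"

definition tangle :: "'a set \<Rightarrow> ('a set \<Rightarrow> int) \<Rightarrow> int \<Rightarrow> 'a set set \<Rightarrow> bool" where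
  "tangle E lam k T \<longleftrightarrow> (\<forall>A\<in>T. A \<subseteq> E)
     \<and> (\<forall>A\<in>T. lam A < k)
     \<and> (\<forall>A. A \<subseteq> E \<longrightarrow> lam A \<le> k - 1 \<longrightarrow> A \<in> T \<or> E - A \<in> T)
     \<and> (\<forall>A\<in>T. \<forall>B\<in>T. \<forall>C\<in>T. A \<union> B \<union> C \<noteq> E)
     \<and> (\<forall>e\<in>E. E - {e} \<notin> T)"

definition T_weak :: "'a set set \<Rightarrow> 'a set \<Rightarrow> bool" where
  "T_weak T X \<longleftrightarrow> (\<exists>A\<in>T. X \<subseteq> A)"

definition T_strong :: "'a set set \<Rightarrow> 'a set \<Rightarrow> bool" where
  "T_strong T X \<longleftrightarrow> \<not> T_weak T X"

text \<open>A \<open>T\<close>-strong \<open>k\<close>-separation \<open>(X, E - X)\<close>, represented by the set \<open>X\<close>.\<close>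
definition strong_k_separation :: "'a set \<Rightarrow> ('a set \<Rightarrow> int) \<Rightarrow> int \<Rightarrow> 'a set set \<Rightarrow> 'a set \<Rightarrow> bool" where
  "strong_k_separation E lam k T X \<longleftrightarrow>
     k_separating E lam k X \<and> T_strong T X \<and> T_strong T (E - X)"

definition fully_closed :: "'a set \<Rightarrow> ('a set \<Rightarrow> int) \<Rightarrow> int \<Rightarrow> 'a set set \<Rightarrow> 'a set \<Rightarrow> bool" where
  "fully_closed E lam k T X \<longleftrightarrow> k_separating E lam k X \<and> T_strong T X
     \<and> (\<forall>Y. Y \<subseteq> E - X \<longrightarrow> Y \<noteq> {} \<longrightarrow> T_weak T Y \<longrightarrow> \<not> k_separating E lam k (X \<union> Y))"

text \<open>Full closure: intersection of all fully closed \<open>k\<close>-separating sets containing \<open>X\<close>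
  (taken inside \<open>E\<close>, so that an empty family gives \<open>E\<close>).\<close>
definition fcl :: "'a set \<Rightarrow> ('a set \<Rightarrow> int) \<Rightarrow> int \<Rightarrow> 'a set set \<Rightarrow> 'a set \<Rightarrow> 'a set" where
  "fcl E lam k T X = E \<inter> \<Inter> {Z. fully_closed E lam k T Z \<and> X \<subseteq> Z}"

definition T_equivalent :: "'a set \<Rightarrow> ('a set \<Rightarrow> int) \<Rightarrow> int \<Rightarrow> 'a set set \<Rightarrow> 'a set \<Rightarrow> 'a set \<Rightarrow> bool" where
  "T_equivalent E lam k T X X' \<longleftrightarrow>
     strong_k_separation E lam k T X \<and> strong_k_separation E lam k T X' \<and>
     {fcl E lam k T X, fcl E lam k T (E - X)} = {fcl E lam k T X', fcl E lam k T (E - X')}"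

definition T_sequential :: "'a set \<Rightarrow> ('a set \<Rightarrow> int) \<Rightarrow> int \<Rightarrow> 'a set set \<Rightarrow> 'a set \<Rightarrow> bool" where
  "T_sequential E lam k T X \<longleftrightarrow> k_separating E lam k X \<and> T_strong T (E - X)
     \<and> fcl E lam k T (E - X) = E"

definition admissible_S :: "'a set \<Rightarrow> ('a set \<Rightarrow> int) \<Rightarrow> int \<Rightarrow> 'a set set \<Rightarrow> 'a set set \<Rightarrow> bool" where
  "admissible_S E lam k T S \<longleftrightarrow> (\<forall>X\<in>S. k_separating E lam k X \<and> \<not> T_sequential E lam k T X
     \<and> T_strong T (E - X))"

text \<open>A \<open>(k,S)\<close>-separation \<open>(X, E - X)\<close>, represented by \<open>X\<close>.\<close>
definition kS_separation :: "'a set \<Rightarrow> ('a set \<Rightarrow> int) \<Rightarrow> int \<Rightarrow> 'a set set \<Rightarrow> 'a set \<Rightarrow> bool" where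
  "kS_separation E lam k S X \<longleftrightarrow> k_separating E lam k X \<and> X \<in> S \<and> E - X \<in> S"

definition tree_compatible :: "'a set \<Rightarrow> ('a set \<Rightarrow> int) \<Rightarrow> int \<Rightarrow> 'a set set \<Rightarrow> 'a set set \<Rightarrow> bool" where
  "tree_compatible E lam k T S \<longleftrightarrow> admissible_S E lam k T S
     \<and> (\<forall>X X'. kS_separation E lam k S X \<longrightarrow> strong_k_separation E lam k T X'
          \<longrightarrow> T_equivalent E lam k T X' X \<longrightarrow> kS_separation E lam k S X')
     \<and> (\<forall>X Y. X \<in> S \<longrightarrow> strong_k_separation E lam k T Y \<longrightarrow> X \<subseteq> Y \<longrightarrow> Y \<in> S)"

text \<open>Petals \<open>P_1,\<dots>,P_n\<close> are the list entries \<open>P ! 0, \<dots>, P ! (n-1)\<close>; indices are taken mod \<open>n\<close>.\<close>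
definition is_partition :: "'a set \<Rightarrow> 'a set list \<Rightarrow> bool" where
  "is_partition E P \<longleftrightarrow> (\<forall>i<length P. P ! i \<noteq> {})
     \<and> (\<forall>i<length P. \<forall>j<length P. i \<noteq> j \<longrightarrow> P ! i \<inter> P ! j = {})
     \<and> \<Union> (set P) = E"

definition k_flower :: "'a set \<Rightarrow> ('a set \<Rightarrow> int) \<Rightarrow> int \<Rightarrow> 'a set set \<Rightarrow> 'a set list \<Rightarrow> bool" where
  "k_flower E lam k T P \<longleftrightarrow> is_partition E P \<and> (\<forall>i<length P. T_strong T (P ! i))
     \<and> (\<forall>i<length P. k_separating E lam k (P ! i)
          \<and> k_separating E lam k (P ! i \<union> P ! (Suc i mod length P)))"

definition displays :: "'a set list \<Rightarrow> 'a set \<Rightarrow> bool" where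
  "displays P X \<longleftrightarrow> (\<exists>I \<subseteq> {..<length P}. X = \<Union> ((!) P ` I))"

definition flower_preceq :: "'a set \<Rightarrow> ('a set \<Rightarrow> int) \<Rightarrow> int \<Rightarrow> 'a set set \<Rightarrow> 'a set set
    \<Rightarrow> 'a set list \<Rightarrow> 'a set list \<Rightarrow> bool" where
  "flower_preceq E lam k T S P1 P2 \<longleftrightarrow>
     (\<forall>X. kS_separation E lam k S X \<and> displays P1 X \<longrightarrow>
        (\<exists>X'. kS_separation E lam k S X' \<and> displays P2 X' \<and> T_equivalent E lam k T X X'))"

definition flower_equivalent :: "'a set \<Rightarrow> ('a set \<Rightarrow> int) \<Rightarrow> int \<Rightarrow> 'a set set \<Rightarrow> 'a set set
    \<Rightarrow> 'a set list \<Rightarrow> 'a set list \<Rightarrow> bool" where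
  "flower_equivalent E lam k T S P1 P2 \<longleftrightarrow>
     flower_preceq E lam k T S P1 P2 \<and> flower_preceq E lam k T S P2 P1"

end

theory Submission
  imports Defs
begin

lemma cs_sym: "connectivity_system E lam \<Longrightarrow> X \<subseteq> E \<Longrightarrow> lam X = lam (E - X)"
  unfolding connectivity_system_def by blast

lemma cs_sub: "connectivity_system E lam \<Longrightarrow> X \<subseteq> E \<Longrightarrow> Y \<subseteq> E
   \<Longrightarrow> lam (X \<union> Y) + lam (X \<inter> Y) \<le> lam X + lam Y"
  unfolding connectivity_system_def by blast

lemma lam_empty_le:
  assumes cs: "connectivity_system E lam" and X: "X \<subseteq> E"
  shows "lam {} \<le> lam X"
proof -
  have "lam (X \<union> (E - X)) + lam (X \<inter> (E - X)) \<le> lam X + lam (E - X)"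
    using cs_sub[OF cs X] by blast
  moreover have "X \<union> (E - X) = E" "X \<inter> (E - X) = {}" using X by auto
  moreover have "lam (E - X) = lam X" using cs_sym[OF cs X] by simp
  moreover have "lam E = lam {}" using cs_sym[OF cs, of "{}"] by simp
  ultimately show ?thesis by simp
qed

lemma strong_mono: "T_strong T X \<Longrightarrow> X \<subseteq> Y \<Longrightarrow> T_strong T Y"
  unfolding T_strong_def T_weak_def by blast

lemma weak_mono: "T_weak T Y \<Longrightarrow> X \<subseteq> Y \<Longrightarrow> T_weak T X"
  unfolding T_weak_def by blast

lemma fc_sub: "fully_closed E lam k T A \<Longrightarrow> A \<subseteq> E"
  unfolding fully_closed_def k_separating_def by blast

lemma fc_lam: "fully_closed E lam k T A \<Longrightarrow> lam A \<le> k"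
  unfolding fully_closed_def k_separating_def by blast

lemma fc_strong: "fully_closed E lam k T A \<Longrightarrow> T_strong T A"
  unfolding fully_closed_def by blast

lemma fc_closed: "fully_closed E lam k T A \<Longrightarrow> Y \<subseteq> E - A \<Longrightarrow> Y \<noteq> {} \<Longrightarrow> T_weak T Y
   \<Longrightarrow> lam (A \<union> Y) \<le> k \<Longrightarrow> False"
  unfolding fully_closed_def k_separating_def by blast

lemma fc_compl_strong:
  assumes cs: "connectivity_system E lam" and fc: "fully_closed E lam k T A" and ne: "A \<noteq> E"
  shows "T_strong T (E - A)"
proof (rule ccontr)
  assume w: "\<not> T_strong T (E - A)"
  have AE: "A \<subseteq> E" using fc_sub[OF fc] .
  have "lam (A \<union> (E - A)) \<le> k"
  proof -
    have "A \<union> (E - A) = E" using AE by auto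
    moreover have "lam E = lam {}" using cs_sym[OF cs, of "{}"] by simp
    ultimately show ?thesis using lam_empty_le[OF cs AE] fc_lam[OF fc] by simp
  qed
  moreover have "E - A \<noteq> {}" using AE ne by auto
  ultimately show False using fc_closed[OF fc, of "E - A"] w unfolding T_strong_def by blast
qed

lemma lemG:
  assumes cs: "connectivity_system E lam" and tg: "tangle E lam k T"
    and fc: "fully_closed E lam k T A" and ZA: "Z \<subseteq> A" and sZ: "T_strong T Z"
    and wW: "T_weak T W" and WE: "W \<subseteq> E" and l: "lam (Z \<union> W) \<le> k"
  shows "W \<subseteq> A"
proof (rule ccontr)
  assume "\<not> W \<subseteq> A"
  hence ne: "W - A \<noteq> {}" by blast
  have AE: "A \<subseteq> E" using fc_sub[OF fc] .
  define M where "M = Z \<union> (W \<inter> A)"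
  have M1: "A \<union> (Z \<union> W) = A \<union> (W - A)" "A \<inter> (Z \<union> W) = M" using ZA unfolding M_def by auto
  have ZWE: "Z \<union> W \<subseteq> E" using ZA AE WE by auto
  have sub: "lam (A \<union> (W - A)) + lam M \<le> lam A + lam (Z \<union> W)"
    using cs_sub[OF cs AE ZWE] M1 by simp
  have wW': "T_weak T (W - A)" using weak_mono[OF wW] by blast
  show False
  proof (cases "lam M \<ge> k")
    case True
    hence "lam (A \<union> (W - A)) \<le> k" using sub l fc_lam[OF fc] by linarith
    moreover have "W - A \<subseteq> E - A" using WE by auto
    ultimately show False using fc_closed[OF fc, of "W - A"] ne wW' by simp
  next
    case False
    have ME: "M \<subseteq> E" using ZWE M_def by auto
    have sM: "T_strong T M" using strong_mono[OF sZ] M_def by blast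
    have "lam M \<le> k - 1" using False by simp
    hence "M \<in> T \<or> E - M \<in> T" using tg ME unfolding tangle_def by blast
    moreover have "M \<notin> T" using sM unfolding T_strong_def T_weak_def by blast
    ultimately have "E - M \<in> T" by blast
    moreover have "E - A \<subseteq> E - M" using ZA unfolding M_def by blast
    ultimately have "T_weak T (E - A)" unfolding T_weak_def by (meson subset_trans)
    moreover have "A \<noteq> E" using ne WE by auto
    ultimately show False using fc_compl_strong[OF cs fc] unfolding T_strong_def by simp
  qed
qed

lemma X_sub_fcl: "X \<subseteq> E \<Longrightarrow> X \<subseteq> fcl E lam k T X"
  unfolding fcl_def by blast

lemma fcl_least: "fully_closed E lam k T A \<Longrightarrow> X \<subseteq> A \<Longrightarrow> fcl E lam k T X \<subseteq> A"
  unfolding fcl_def by blast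

lemma fcl_sub: "fcl E lam k T X \<subseteq> E"
  unfolding fcl_def by blast

lemma fcl_eqI: "(\<And>Z. fully_closed E lam k T Z \<Longrightarrow> (X \<subseteq> Z \<longleftrightarrow> Y \<subseteq> Z)) \<Longrightarrow>
   fcl E lam k T X = fcl E lam k T Y"
proof -
  assume h: "\<And>Z. fully_closed E lam k T Z \<Longrightarrow> (X \<subseteq> Z \<longleftrightarrow> Y \<subseteq> Z)"
  have "{Z. fully_closed E lam k T Z \<and> X \<subseteq> Z} = {Z. fully_closed E lam k T Z \<and> Y \<subseteq> Z}"
    using h by blast
  thus ?thesis unfolding fcl_def by simp
qed

lemma fcl_in:
  assumes "X \<subseteq> E" "\<And>A. fully_closed E lam k T A \<Longrightarrow> Y \<subseteq> A \<Longrightarrow> X \<subseteq> A"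
  shows "X \<subseteq> fcl E lam k T Y"
  using assms unfolding fcl_def by blast

lemma fcl_fc:
  assumes cs: "connectivity_system E lam" and tg: "tangle E lam k T"
    and XE: "X \<subseteq> E" and sX: "T_strong T X" and lX: "lam X \<le> k"
  shows "fully_closed E lam k T (fcl E lam k T X)"
proof -
  define \<M> where "\<M> = {M. X \<subseteq> M \<and> M \<subseteq> E \<and> lam M \<le> k \<and>
      (\<forall>A. fully_closed E lam k T A \<and> X \<subseteq> A \<longrightarrow> M \<subseteq> A)}"
  have fin: "finite \<M>"
  proof -
    have "finite E" using cs unfolding connectivity_system_def by blast
    hence "finite (Pow E)" by simp
    moreover have "\<M> \<subseteq> Pow E" unfolding \<M>_def by blast
    ultimately show ?thesis using finite_subset by blast
  qed
  have "X \<in> \<M>" using XE lX unfolding \<M>_def by blast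
  then obtain M where MM: "M \<in> \<M>" and max: "\<forall>b\<in>\<M>. M \<le> b \<longrightarrow> M = b"
    using finite_has_maximal[OF fin] by blast
  have M: "X \<subseteq> M" "M \<subseteq> E" "lam M \<le> k" "\<And>A. fully_closed E lam k T A \<Longrightarrow> X \<subseteq> A \<Longrightarrow> M \<subseteq> A"
    using MM unfolding \<M>_def by blast+
  have sM: "T_strong T M" using strong_mono[OF sX M(1)] .
  have fcM: "fully_closed E lam k T M"
    unfolding fully_closed_def
  proof (intro conjI allI impI)
    show "k_separating E lam k M" using M unfolding k_separating_def by blast
    show "T_strong T M" by fact
    fix Y assume Y: "Y \<subseteq> E - M" "Y \<noteq> {}" "T_weak T Y"
    show "\<not> k_separating E lam k (M \<union> Y)"
    proof
      assume ks: "k_separating E lam k (M \<union> Y)"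
      have "M \<union> Y \<in> \<M>"
        unfolding \<M>_def
      proof (intro CollectI conjI allI impI)
        show "X \<subseteq> M \<union> Y" using M by blast
        show "M \<union> Y \<subseteq> E" using M Y by blast
        show "lam (M \<union> Y) \<le> k" using ks unfolding k_separating_def by blast
        fix A assume A: "fully_closed E lam k T A \<and> X \<subseteq> A"
        have "Y \<subseteq> A" using lemG[OF cs tg _ M(4) sM Y(3)] A Y ks
          unfolding k_separating_def by blast
        thus "M \<union> Y \<subseteq> A" using M(4) A by blast
      qed
      hence "M = M \<union> Y" using max by blast
      thus False using Y by blast
    qed
  qed
  have "fcl E lam k T X = M"
  proof
    show "fcl E lam k T X \<subseteq> M" using fcl_least[OF fcM M(1)] .
    show "M \<subseteq> fcl E lam k T X" by (rule fcl_in[OF M(2)]) (rule M(4))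
  qed
  thus ?thesis using fcM by simp
qed

lemma lemL1:
  assumes cs: "connectivity_system E lam" and tg: "tangle E lam k T"
    and XE: "X \<subseteq> E" and sX: "T_strong T X" and lX: "lam X \<le> k"
    and FE: "fcl E lam k T X \<noteq> E"
    and fcZ: "fully_closed E lam k T Z" and ZF: "E - fcl E lam k T X \<subseteq> Z"
  shows "E - X \<subseteq> Z"
proof -
  define F where "F = fcl E lam k T X"
  have fcF: "fully_closed E lam k T F" using fcl_fc[OF cs tg XE sX lX] F_def by simp
  have sF: "T_strong T (E - F)" using fc_compl_strong[OF cs fcF] FE F_def by simp
  have FsE: "F \<subseteq> E" using fc_sub[OF fcF] .
  define \<M> where "\<M> = {M. X \<subseteq> M \<and> M \<subseteq> F \<and> lam M \<le> k \<and>
      (\<forall>Z. fully_closed E lam k T Z \<and> E - M \<subseteq> Z \<longrightarrow> E - X \<subseteq> Z)}"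
  have fin: "finite \<M>"
  proof -
    have "finite E" using cs unfolding connectivity_system_def by blast
    hence "finite (Pow E)" by simp
    moreover have "\<M> \<subseteq> Pow E" unfolding \<M>_def using FsE by blast
    ultimately show ?thesis using finite_subset by blast
  qed
  have "X \<subseteq> F" using X_sub_fcl[OF XE] F_def by simp
  hence "X \<in> \<M>" using lX unfolding \<M>_def by blast
  then obtain M where MM: "M \<in> \<M>" and max: "\<forall>b\<in>\<M>. M \<le> b \<longrightarrow> M = b"
    using finite_has_maximal[OF fin] by blast
  have M: "X \<subseteq> M" "M \<subseteq> F" "lam M \<le> k"
    "\<And>Z. fully_closed E lam k T Z \<Longrightarrow> E - M \<subseteq> Z \<Longrightarrow> E - X \<subseteq> Z"
    using MM unfolding \<M>_def by blast+
  have ME: "M \<subseteq> E" using M(2) FsE by blast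
  have sM: "T_strong T M" using strong_mono[OF sX M(1)] .
  have fcM: "fully_closed E lam k T M"
    unfolding fully_closed_def
  proof (intro conjI allI impI)
    show "k_separating E lam k M" using M ME unfolding k_separating_def by blast
    show "T_strong T M" by fact
    fix Y assume Y: "Y \<subseteq> E - M" "Y \<noteq> {}" "T_weak T Y"
    show "\<not> k_separating E lam k (M \<union> Y)"
    proof
      assume ks: "k_separating E lam k (M \<union> Y)"
      have lMY: "lam (M \<union> Y) \<le> k" using ks unfolding k_separating_def by blast
      have YE: "Y \<subseteq> E" using Y by blast
      have "M \<union> Y \<in> \<M>"
        unfolding \<M>_def
      proof (intro CollectI conjI allI impI)
        show "X \<subseteq> M \<union> Y" using M by blast
        have "Y \<subseteq> F" using lemG[OF cs tg fcF M(2) sM Y(3) YE lMY] .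
        thus "M \<union> Y \<subseteq> F" using M by blast
        show "lam (M \<union> Y) \<le> k" by fact
        fix Z assume Z: "fully_closed E lam k T Z \<and> E - (M \<union> Y) \<subseteq> Z"
        have s1: "T_strong T (E - (M \<union> Y))"
          using strong_mono[OF sF] \<open>M \<union> Y \<subseteq> F\<close> by blast
        have eq: "(E - (M \<union> Y)) \<union> Y = E - M" using Y by blast
        have "lam ((E - (M \<union> Y)) \<union> Y) \<le> k" using eq cs_sym[OF cs ME] M(3) by simp
        hence "Y \<subseteq> Z" using lemG[OF cs tg _ _ s1 Y(3) YE] Z by blast
        hence "E - M \<subseteq> Z" using Z eq by blast
        thus "E - X \<subseteq> Z" using M(4) Z by blast
      qed
      hence "M = M \<union> Y" using max by blast
      thus False using Y by blast
    qed
  qed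
  have "F \<subseteq> M" using fcl_least[OF fcM M(1)] F_def by simp
  hence "M = F" using M(2) by blast
  thus ?thesis using M(4)[OF fcZ] ZF F_def by simp
qed

lemma main_case:
  assumes cs: "connectivity_system E lam" and tg: "tangle E lam k T"
    and adm: "admissible_S E lam k T S"
    and XS: "X \<in> S" and cXS: "E - X \<in> S"
    and P1E: "P1 \<subseteq> E" and P2E: "P2 \<subseteq> E" and disj: "P1 \<inter> X = {}" and P2X: "P2 \<subseteq> X"
    and P1cl: "P1 \<subseteq> fcl E lam k T P2" and l12: "lam (P1 \<union> P2) \<le> k"
    and sP2: "T_strong T P2"
  shows "strong_k_separation E lam k T (X \<union> P1) \<and> T_equivalent E lam k T X (X \<union> P1)"
proof -
  have X1: "k_separating E lam k X" "T_strong T (E - X)" "\<not> T_sequential E lam k T X"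
    using adm XS unfolding admissible_S_def by blast+
  have X2: "k_separating E lam k (E - X)" "T_strong T (E - (E - X))"
      "\<not> T_sequential E lam k T (E - X)"
    using adm cXS unfolding admissible_S_def by blast+
  have XE: "X \<subseteq> E" and lX: "lam X \<le> k" using X1 unfolding k_separating_def by blast+
  have EEX: "E - (E - X) = X" using XE by blast
  have sX: "T_strong T X" using X2(2) EEX by simp
  have FE: "fcl E lam k T X \<noteq> E" using X2 EEX unfolding T_sequential_def by simp
  define F where "F = fcl E lam k T X"
  have fcF: "fully_closed E lam k T F" using fcl_fc[OF cs tg XE sX lX] F_def by simp
  have sF: "T_strong T (E - F)" using fc_compl_strong[OF cs fcF] FE F_def by simp
  have P1A: "P1 \<subseteq> A" if "fully_closed E lam k T A" "X \<subseteq> A" for A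
  proof -
    have "fcl E lam k T P2 \<subseteq> A" using fcl_least[OF that(1)] that(2) P2X by blast
    thus ?thesis using P1cl by blast
  qed
  have P1F: "P1 \<subseteq> F" using P1A[OF fcF] X_sub_fcl[OF XE] F_def by simp
  have lP2: "lam P2 \<ge> k"
  proof (rule ccontr)
    assume "\<not> lam P2 \<ge> k"
    hence "lam P2 \<le> k - 1" by simp
    hence "P2 \<in> T \<or> E - P2 \<in> T" using tg P2E unfolding tangle_def by blast
    moreover have "P2 \<notin> T" using sP2 unfolding T_strong_def T_weak_def by auto
    ultimately have "E - P2 \<in> T" by blast
    moreover have "E - F \<subseteq> E - P2" using P2X X_sub_fcl[OF XE] F_def by blast
    ultimately have "T_weak T (E - F)" unfolding T_weak_def by (meson subset_trans)
    thus False using sF unfolding T_strong_def by simp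
  qed
  have XPE: "X \<union> P1 \<subseteq> E" using XE P1E by blast
  have P12E: "P1 \<union> P2 \<subseteq> E" using P1E P2E by blast
  have "lam (X \<union> (P1 \<union> P2)) + lam (X \<inter> (P1 \<union> P2)) \<le> lam X + lam (P1 \<union> P2)"
    using cs_sub[OF cs XE P12E] .
  moreover have "X \<union> (P1 \<union> P2) = X \<union> P1" "X \<inter> (P1 \<union> P2) = P2" using disj P2X by auto
  ultimately have lXP: "lam (X \<union> P1) \<le> k" using lX l12 lP2 by simp
  have sXP: "T_strong T (X \<union> P1)" using strong_mono[OF sX] by blast
  have "X \<union> P1 \<subseteq> F" using P1F X_sub_fcl[OF XE] F_def by simp
  hence "E - F \<subseteq> E - (X \<union> P1)" by blast
  hence sYP: "T_strong T (E - (X \<union> P1))" using strong_mono[OF sF] by simp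
  have skX: "strong_k_separation E lam k T X"
    unfolding strong_k_separation_def using X1 sX by blast
  have skXP: "strong_k_separation E lam k T (X \<union> P1)"
    unfolding strong_k_separation_def k_separating_def using XPE lXP sXP sYP by blast
  have e1: "fcl E lam k T (X \<union> P1) = fcl E lam k T X"
  proof (rule fcl_eqI)
    fix Z assume "fully_closed E lam k T Z"
    thus "X \<union> P1 \<subseteq> Z \<longleftrightarrow> X \<subseteq> Z" using P1A[of Z] by blast
  qed
  have e2: "fcl E lam k T (E - (X \<union> P1)) = fcl E lam k T (E - X)"
  proof (rule fcl_eqI)
    fix Z assume fcZ: "fully_closed E lam k T Z"
    show "E - (X \<union> P1) \<subseteq> Z \<longleftrightarrow> E - X \<subseteq> Z"
    proof
      assume h: "E - (X \<union> P1) \<subseteq> Z"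
      have "E - F \<subseteq> E - (X \<union> P1)" by fact
      hence "E - fcl E lam k T X \<subseteq> Z" using h F_def by simp
      thus "E - X \<subseteq> Z" using lemL1[OF cs tg XE sX lX FE fcZ] by blast
    qed blast
  qed
  show ?thesis using skX skXP e1 e2 unfolding T_equivalent_def by simp
qed

lemma part_disj:
  assumes "is_partition E P" "i < length P" "I \<subseteq> {..<length P}" "i \<notin> I"
  shows "P ! i \<inter> \<Union> ((!) P ` I) = {}"
proof -
  have "\<And>j. j \<in> I \<Longrightarrow> P ! i \<inter> P ! j = {}"
  proof -
    fix j assume "j \<in> I"
    hence "j < length P" "i \<noteq> j" using assms by auto
    thus "P ! i \<inter> P ! j = {}" using assms(1,2) unfolding is_partition_def by blast
  qed
  thus ?thesis by blast
qed

lemma part_union: "is_partition E P \<Longrightarrow> \<Union> ((!) P ` {..<length P}) = E"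
proof -
  have "(!) P ` {..<length P} = set P" by (auto simp: set_conv_nth)
  thus "is_partition E P \<Longrightarrow> \<Union> ((!) P ` {..<length P}) = E" unfolding is_partition_def by simp
qed

lemma compl_disp:
  assumes p: "is_partition E P" and I: "I \<subseteq> {..<length P}"
  shows "E - \<Union> ((!) P ` I) = \<Union> ((!) P ` ({..<length P} - I))"
proof
  have U: "\<Union> ((!) P ` {..<length P}) = E" using part_union[OF p] .
  show "E - \<Union> ((!) P ` I) \<subseteq> \<Union> ((!) P ` ({..<length P} - I))"
  proof
    fix x assume x: "x \<in> E - \<Union> ((!) P ` I)"
    then obtain j where "j < length P" "x \<in> P ! j" using U by blast
    moreover have "j \<notin> I" using x \<open>x \<in> P ! j\<close> by blast
    ultimately show "x \<in> \<Union> ((!) P ` ({..<length P} - I))" by blast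
  qed
  show "\<Union> ((!) P ` ({..<length P} - I)) \<subseteq> E - \<Union> ((!) P ` I)"
  proof
    fix x assume "x \<in> \<Union> ((!) P ` ({..<length P} - I))"
    then obtain j where j: "j < length P" "j \<notin> I" "x \<in> P ! j" by blast
    have "P ! j \<inter> \<Union> ((!) P ` I) = {}" using part_disj[OF p j(1) I j(2)] .
    moreover have "x \<in> E" using U j by blast
    ultimately show "x \<in> E - \<Union> ((!) P ` I)" using j by blast
  qed
qed

lemma Q_nth:
  assumes "length P \<ge> 2" "1 \<le> j" "j < length P - 1"
  shows "((P ! 0 \<union> P ! 1) # drop 2 P) ! j = P ! Suc j"
proof -
  obtain m where m: "j = Suc m" using assms(2) by (cases j) auto
  have "((P ! 0 \<union> P ! 1) # drop 2 P) ! j = drop 2 P ! m" using m by simp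
  also have "\<dots> = P ! (2 + m)" using assms m by (subst nth_drop) auto
  finally show ?thesis using m by simp
qed

lemma disp_Q:
  assumes n: "length P \<ge> 2" and J: "J \<subseteq> {..<length P - 1}"
  shows "\<Union> ((!) ((P ! 0 \<union> P ! 1) # drop 2 P) ` J)
       = \<Union> ((!) P ` ((if 0 \<in> J then {0, 1} else {}) \<union> Suc ` (J - {0})))"
proof -
  define Q where "Q = (P ! 0 \<union> P ! 1) # drop 2 P"
  have a: "\<Union> ((!) Q ` (J - {0})) = \<Union> ((!) P ` (Suc ` (J - {0})))"
  proof -
    have "\<And>j. j \<in> J - {0} \<Longrightarrow> Q ! j = P ! Suc j"
      unfolding Q_def using Q_nth[OF n] J by auto
    hence "(!) Q ` (J - {0}) = (!) P ` (Suc ` (J - {0}))"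
      by (auto simp: image_image intro!: image_cong)
    thus ?thesis by simp
  qed
  have b: "J = (if 0 \<in> J then {0} else {}) \<union> (J - {0})" by auto
  have "\<Union> ((!) Q ` J) = (if 0 \<in> J then Q ! 0 else {}) \<union> \<Union> ((!) Q ` (J - {0}))"
    by (subst b) auto
  also have "\<dots> = (if 0 \<in> J then P ! 0 \<union> P ! 1 else {}) \<union> \<Union> ((!) P ` (Suc ` (J - {0})))"
    using a Q_def by simp
  also have "\<dots> = \<Union> ((!) P ` ((if 0 \<in> J then {0, 1} else {}) \<union> Suc ` (J - {0})))"
    by auto
  finally show ?thesis unfolding Q_def .
qed

lemma J0_props:
  assumes "I \<subseteq> {..<n}"
  shows "(\<lambda>i. i - 1) ` (I - {0, 1}) \<subseteq> {..<n - 1}" "0 \<notin> (\<lambda>i. i - 1) ` (I - {0, 1})"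
    "Suc ` ((\<lambda>i. i - 1) ` (I - {0, 1})) = I - {0, 1}"
proof -
  show "(\<lambda>i. i - 1) ` (I - {0, 1}) \<subseteq> {..<n - 1}" using assms by auto
  show "0 \<notin> (\<lambda>i. i - 1) ` (I - {0, 1})" by auto
  have "Suc ` ((\<lambda>i. i - 1) ` (I - {0, 1})) = (\<lambda>i. Suc (i - 1)) ` (I - {0, 1})"
    by (simp add: image_image)
  also have "\<dots> = id ` (I - {0, 1})" by (rule image_cong) auto
  finally show "Suc ` ((\<lambda>i. i - 1) ` (I - {0, 1})) = I - {0, 1}" by simp
qed

lemma kS_strong:
  assumes "admissible_S E lam k T S" "kS_separation E lam k S X"
  shows "strong_k_separation E lam k T X"
proof -
  have X: "X \<in> S" "E - X \<in> S" "k_separating E lam k X" using assms(2)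
    unfolding kS_separation_def by blast+
  have "X \<subseteq> E" using X(3) unfolding k_separating_def by blast
  hence e: "E - (E - X) = X" by blast
  have "T_strong T (E - X)" "T_strong T (E - (E - X))"
    using assms(1) X unfolding admissible_S_def by blast+
  thus ?thesis using X(3) e unfolding strong_k_separation_def by simp
qed

lemma T_equiv_sym: "T_equivalent E lam k T X Y \<Longrightarrow> T_equivalent E lam k T Y X"
  unfolding T_equivalent_def by auto

lemma T_equiv_compl:
  assumes cs: "connectivity_system E lam" and XE: "X \<subseteq> E"
    and h: "T_equivalent E lam k T (E - X) Y"
  shows "T_equivalent E lam k T X Y"
proof -
  have e: "E - (E - X) = X" using XE by blast
  have s: "strong_k_separation E lam k T (E - X)" using h unfolding T_equivalent_def by blast
  have "strong_k_separation E lam k T X"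
    using s e cs_sym[OF cs XE] XE unfolding strong_k_separation_def k_separating_def by auto
  thus ?thesis using h e unfolding T_equivalent_def by auto
qed

lemma caseB:
  assumes cs: "connectivity_system E lam" and tg: "tangle E lam k T"
    and tc: "tree_compatible E lam k T S" and n: "length P \<ge> 2"
    and fl: "k_flower E lam k T P" and cl: "P ! 0 \<subseteq> fcl E lam k T (P ! 1)"
    and kS: "kS_separation E lam k S X" and I: "I \<subseteq> {..<length P}"
    and XI: "X = \<Union> ((!) P ` I)" and i0: "0 \<notin> I" and i1: "1 \<in> I"
  shows "\<exists>X'. kS_separation E lam k S X' \<and> displays ((P ! 0 \<union> P ! 1) # drop 2 P) X'
     \<and> T_equivalent E lam k T X X'"
proof -
  have adm: "admissible_S E lam k T S" using tc unfolding tree_compatible_def by blast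
  have part: "is_partition E P" using fl unfolding k_flower_def by blast
  have l0: "0 < length P" and l1: "1 < length P" using n by auto
  have P0E: "P ! 0 \<subseteq> E" using fl l0 unfolding k_flower_def k_separating_def by blast
  have P1E: "P ! 1 \<subseteq> E" using fl l1 unfolding k_flower_def k_separating_def by blast
  have sP1: "T_strong T (P ! 1)" using fl l1 unfolding k_flower_def by blast
  have "Suc 0 mod length P = 1" using n by simp
  hence l01: "lam (P ! 0 \<union> P ! 1) \<le> k" using fl l0 unfolding k_flower_def k_separating_def
    by (metis One_nat_def)
  have XS: "X \<in> S" "E - X \<in> S" using kS unfolding kS_separation_def by blast+
  have disj: "P ! 0 \<inter> X = {}" using part_disj[OF part l0 I i0] XI by simp
  have P1X: "P ! 1 \<subseteq> X" using XI i1 by blast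
  have m: "strong_k_separation E lam k T (X \<union> P ! 0) \<and> T_equivalent E lam k T X (X \<union> P ! 0)"
    using main_case[OF cs tg adm XS P0E P1E disj P1X cl _ sP1] l01 by (simp add: Un_commute)
  have kS': "kS_separation E lam k S (X \<union> P ! 0)"
    using tc kS m T_equiv_sym unfolding tree_compatible_def by blast
  define J0 where "J0 = (\<lambda>i. i - 1) ` (I - {0, 1})"
  have J0: "J0 \<subseteq> {..<length P - 1}" "0 \<notin> J0" "Suc ` J0 = I - {0, 1}"
    using J0_props[OF I] unfolding J0_def by blast+
  have Jsub: "insert 0 J0 \<subseteq> {..<length P - 1}" using J0 n by auto
  have "\<Union> ((!) ((P ! 0 \<union> P ! 1) # drop 2 P) ` insert 0 J0)
      = \<Union> ((!) P ` ({0, 1} \<union> Suc ` (insert 0 J0 - {0})))"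
    using disp_Q[OF n Jsub] by simp
  also have "insert 0 J0 - {0} = J0" using J0 by auto
  also have "{0, 1} \<union> Suc ` J0 = insert 0 I" using J0 i1 by auto
  also have "\<Union> ((!) P ` insert 0 I) = X \<union> P ! 0" using XI by auto
  finally have "displays ((P ! 0 \<union> P ! 1) # drop 2 P) (X \<union> P ! 0)"
    unfolding displays_def using Jsub n by (intro exI[of _ "insert 0 J0"]) auto
  thus ?thesis using kS' m by blast
qed

theorem lemma4p3:
  fixes E :: "'a set" and lam :: "'a set \<Rightarrow> int" and k :: int
    and T :: "'a set set" and S :: "'a set set" and P :: "'a set list"
  assumes "connectivity_system E lam"
    and "tangle E lam k T"
    and "tree_compatible E lam k T S"
    and "length P \<ge> 2"
    and "k_flower E lam k T P"
    and "P ! 0 \<subseteq> fcl E lam k T (P ! 1)"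
  shows "flower_equivalent E lam k T S ((P ! 0 \<union> P ! 1) # drop 2 P) P"
proof -
  note cs = assms(1) and tg = assms(2) and tc = assms(3) and n = assms(4)
    and fl = assms(5) and cl = assms(6)
  define Q where "Q = (P ! 0 \<union> P ! 1) # drop 2 P"
  have adm: "admissible_S E lam k T S" using tc unfolding tree_compatible_def by blast
  have part: "is_partition E P" using fl unfolding k_flower_def by blast
  have lQ: "length Q = length P - 1" unfolding Q_def using n by simp
  have d1: "flower_preceq E lam k T S Q P"
    unfolding flower_preceq_def
  proof (intro allI impI)
    fix X assume h: "kS_separation E lam k S X \<and> displays Q X"
    then obtain J where J: "J \<subseteq> {..<length Q}" "X = \<Union> ((!) Q ` J)"
      unfolding displays_def by blast
    have J': "J \<subseteq> {..<length P - 1}" using J lQ by simp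
    have "X = \<Union> ((!) P ` ((if 0 \<in> J then {0, 1} else {}) \<union> Suc ` (J - {0})))"
      using disp_Q[OF n J'] J Q_def by simp
    moreover have "(if 0 \<in> J then {0, 1} else {}) \<union> Suc ` (J - {0}) \<subseteq> {..<length P}"
      using J' n by auto
    ultimately have "displays P X" unfolding displays_def by blast
    moreover have "T_equivalent E lam k T X X"
      using kS_strong[OF adm] h unfolding T_equivalent_def by blast
    ultimately show "\<exists>X'. kS_separation E lam k S X' \<and> displays P X' \<and> T_equivalent E lam k T X X'"
      using h by blast
  qed
  have d2: "flower_preceq E lam k T S P Q"
    unfolding flower_preceq_def
  proof (intro allI impI)
    fix X assume h: "kS_separation E lam k S X \<and> displays P X"
    then obtain I where I: "I \<subseteq> {..<length P}" "X = \<Union> ((!) P ` I)"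
      unfolding displays_def by blast
    have kS: "kS_separation E lam k S X" using h by blast
    show "\<exists>X'. kS_separation E lam k S X' \<and> displays Q X' \<and> T_equivalent E lam k T X X'"
    proof (cases "(0 \<in> I) = (1 \<in> I)")
      case True
      define J0 where "J0 = (\<lambda>i. i - 1) ` (I - {0, 1})"
      have J0: "J0 \<subseteq> {..<length P - 1}" "0 \<notin> J0" "Suc ` J0 = I - {0, 1}"
        using J0_props[OF I(1)] unfolding J0_def by blast+
      define J where "J = (if 0 \<in> I then insert 0 J0 else J0)"
      have Jsub: "J \<subseteq> {..<length P - 1}" using J0 n unfolding J_def by auto
      have "\<Union> ((!) Q ` J)
          = \<Union> ((!) P ` ((if 0 \<in> J then {0, 1} else {}) \<union> Suc ` (J - {0})))"
        using disp_Q[OF n Jsub] Q_def by simp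
      also have "(if 0 \<in> J then {0, 1} else {}) \<union> Suc ` (J - {0}) = I"
      proof -
        have "J - {0} = J0" using J0 unfolding J_def by auto
        thus ?thesis using J0 True unfolding J_def by auto
      qed
      finally have "X = \<Union> ((!) Q ` J)" using I by simp
      hence "displays Q X" unfolding displays_def using Jsub lQ by (intro exI[of _ J]) simp
      moreover have "T_equivalent E lam k T X X"
        using kS_strong[OF adm kS] unfolding T_equivalent_def by blast
      ultimately show ?thesis using kS by blast
    next
      case False
      show ?thesis
      proof (cases "0 \<in> I")
        case False
        hence "1 \<in> I" using \<open>(0 \<in> I) \<noteq> (1 \<in> I)\<close> by blast
        thus ?thesis using caseB[OF cs tg tc n fl cl kS I(1) I(2) False] Q_def by simp
      next
        case True
        hence i1: "1 \<notin> I" using \<open>(0 \<in> I) \<noteq> (1 \<in> I)\<close> by blast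
        define Ic where "Ic = {..<length P} - I"
        have Ic: "Ic \<subseteq> {..<length P}" "0 \<notin> Ic" "1 \<in> Ic" using True i1 n unfolding Ic_def by auto
        have XcI: "E - X = \<Union> ((!) P ` Ic)" using compl_disp[OF part I(1)] I(2) Ic_def by simp
        have XE: "X \<subseteq> E" using kS unfolding kS_separation_def k_separating_def by blast
        have "lam (E - X) = lam X" using cs_sym[OF cs XE] by simp
        moreover have "E - (E - X) = X" using XE by blast
        ultimately have kSc: "kS_separation E lam k S (E - X)"
          using kS unfolding kS_separation_def k_separating_def by auto
        obtain X' where X': "kS_separation E lam k S X'" "displays Q X'"
            "T_equivalent E lam k T (E - X) X'"
          using caseB[OF cs tg tc n fl cl kSc Ic(1) XcI Ic(2) Ic(3)] Q_def by blast
        have "T_equivalent E lam k T X X'" using T_equiv_compl[OF cs XE X'(3)] .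
        thus ?thesis using X' by blast
      qed
    qed
  qed
  show ?thesis unfolding flower_equivalent_def using d1 d2 Q_def by simp
qed

end
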